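(* Let $R$ be a commutative Noetherian ring of prime characteristic $p$, $G$ an $x$-torsion-free left $R[x,f]$-module, $\mathfrak{a}$ an ideal of $R$, $L:=\operatorname{ann}_G(\mathfrak{a}R[x,f])$ (so $G/L$ is $x$-torsion-free), and $N$ an $R$-submodule of $G$ with $L\subseteq N\subseteq G$. (i) If $N=\operatorname{ann}_G(\mathfrak{b}R[x,f])$ for an ideal $\mathfrak{b}\subseteq\mathfrak{a}$, then $N/L=\operatorname{ann}_{G/L}((\mathfrak{b}:\mathfrak{a})R[x,f])$; moreover, if $\operatorname{grann}_{R[x,f]}N=\mathfrak{b}R[x,f]$, then $\operatorname{grann}_{R[x,f]}(N/L)=(\mathfrak{b}:\mathfrak{a})R[x,f]$. (ii) If $N/L=\operatorname{ann}_{G/L}(\mathfrak{c}R[x,f])$ for an ideal $\mathfrak{c}$, then $N=\operatorname{ann}_G(\mathfrak{a}\mathfrak{c}R[x,f])=\operatorname{ann}_G((\mathfrak{a}\cap\mathfrak{c})R[x,f])$; moreover, if $\operatorname{grann}_{R[x,f]}L=\mathfrak{a}R[x,f]$ and $\operatorname{grann}_{R[x,f]}(N/L)=\mathfrak{c}R[x,f]$, then $\operatorname{grann}_{R[x,f]}N=(\mathfrak{a}\cap\mathfrak{c})R[x,f]$. (iii) $N\mapsto N/L$ is an order-preserving bijection from the set of special annihilator submodules of $G$ containing $L$ to the set of special annihilator submodules of $G/L$.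
   Context: $R[x,f]$ is the Frobenius skew polynomial ring: free left $R$-module on $(x^i)_{i\ge0}$, $xr=r^px$; for an ideal $\mathfrak{d}$, $\mathfrak{d}R[x,f]=\bigoplus_n\mathfrak{d}x^n$. $x$-torsion-free: $xg=0\Rightarrow g=0$. $\operatorname{ann}_M\mathfrak{B}$ is the set of elements of $M$ killed by $\mathfrak{B}$; special annihilator submodules of $M$ are those of form $\operatorname{ann}_M\mathfrak{B}$ for a graded two-sided ideal $\mathfrak{B}=\bigoplus_n\mathfrak{b}_nx^n$ ($(\mathfrak{b}_n)$ ascending). $\operatorname{grann}N$ is the set of $\sum r_ix^i$ with each $r_ix^i$ annihilating $N$. *)

theory Defs
  imports Main "HOL-Computational_Algebra.Polynomial"
begin

definition is_ideal :: "'r::comm_ring_1 set \<Rightarrow> bool" where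
  "is_ideal I \<longleftrightarrow> 0 \<in> I \<and> (\<forall>a\<in>I. \<forall>b\<in>I. a + b \<in> I) \<and> (\<forall>r. \<forall>a\<in>I. r * a \<in> I)"

definition ideal_colon :: "'r::comm_ring_1 set \<Rightarrow> 'r set \<Rightarrow> 'r set" where
  "ideal_colon B A = {r. \<forall>a\<in>A. r * a \<in> B}"

definition ideal_prod :: "'r::comm_ring_1 set \<Rightarrow> 'r set \<Rightarrow> 'r set" where
  "ideal_prod A C = \<Inter>{I. is_ideal I \<and> (\<forall>a\<in>A. \<forall>c\<in>C. a * c \<in> I)}"

definition noetherian_ring :: "'r::comm_ring_1 itself \<Rightarrow> bool" where
  "noetherian_ring _ \<longleftrightarrow>
     (\<forall>I :: nat \<Rightarrow> 'r set. (\<forall>n. is_ideal (I n) \<and> I n \<subseteq> I (Suc n)) \<longrightarrow>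
        (\<exists>m. \<forall>n\<ge>m. I n = I m))"

text \<open>An element of R[x,f] is \<open>\<Sum> r_i x^i\<close>; as a left R-module R[x,f] is free on the
  powers of x, so we represent its elements by their coefficient sequences, i.e. by
  \<open>'r poly\<close> (only the underlying left R-module, not the multiplication, is taken from
  the polynomial type).  A left R[x,f]-module is given by an R-module together with the
  action \<open>frob\<close> of x, which is additive and satisfies \<open>x (r g) = r^p (x g)\<close>.\<close>

record ('r, 'm) skew_mod =
  carrier :: "'m set"
  zero :: 'm
  add :: "'m \<Rightarrow> 'm \<Rightarrow> 'm"
  smult :: "'r \<Rightarrow> 'm \<Rightarrow> 'm"
  frob :: "'m \<Rightarrow> 'm"

definition skew_module :: "nat \<Rightarrow> ('r::comm_ring_1, 'm) skew_mod \<Rightarrow> bool" where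
  "skew_module p M \<longleftrightarrow>
     zero M \<in> carrier M \<and>
     (\<forall>g\<in>carrier M. \<forall>h\<in>carrier M. add M g h \<in> carrier M) \<and>
     (\<forall>g\<in>carrier M. \<forall>h\<in>carrier M. \<forall>k\<in>carrier M. add M (add M g h) k = add M g (add M h k)) \<and>
     (\<forall>g\<in>carrier M. \<forall>h\<in>carrier M. add M g h = add M h g) \<and>
     (\<forall>g\<in>carrier M. add M (zero M) g = g) \<and>
     (\<forall>g\<in>carrier M. \<exists>h\<in>carrier M. add M g h = zero M) \<and>
     (\<forall>r. \<forall>g\<in>carrier M. smult M r g \<in> carrier M) \<and>
     (\<forall>r s. \<forall>g\<in>carrier M. smult M (r + s) g = add M (smult M r g) (smult M s g)) \<and>
     (\<forall>r. \<forall>g\<in>carrier M. \<forall>h\<in>carrier M. smult M r (add M g h) = add M (smult M r g) (smult M r h)) \<and>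
     (\<forall>r s. \<forall>g\<in>carrier M. smult M (r * s) g = smult M r (smult M s g)) \<and>
     (\<forall>g\<in>carrier M. smult M 1 g = g) \<and>
     (\<forall>g\<in>carrier M. frob M g \<in> carrier M) \<and>
     (\<forall>g\<in>carrier M. \<forall>h\<in>carrier M. frob M (add M g h) = add M (frob M g) (frob M h)) \<and>
     (\<forall>r. \<forall>g\<in>carrier M. frob M (smult M r g) = smult M (r ^ p) (frob M g))"

definition act :: "('r::comm_ring_1, 'm) skew_mod \<Rightarrow> 'r poly \<Rightarrow> 'm \<Rightarrow> 'm" where
  "act M \<theta> g = foldr (add M)
      (map (\<lambda>i. smult M (coeff \<theta> i) ((frob M ^^ i) g)) [0..<Suc (degree \<theta>)]) (zero M)"

definition x_torsion_free :: "('r::comm_ring_1, 'm) skew_mod \<Rightarrow> bool" where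
  "x_torsion_free M \<longleftrightarrow> (\<forall>g\<in>carrier M. frob M g = zero M \<longrightarrow> g = zero M)"

definition r_submodule :: "('r::comm_ring_1, 'm) skew_mod \<Rightarrow> 'm set \<Rightarrow> bool" where
  "r_submodule M N \<longleftrightarrow> N \<subseteq> carrier M \<and> zero M \<in> N \<and>
     (\<forall>g\<in>N. \<forall>h\<in>N. add M g h \<in> N) \<and> (\<forall>r. \<forall>g\<in>N. smult M r g \<in> N)"

text \<open>The extension \<open>\<dd>R[x,f] = \<Oplus>_n \<dd> x^n\<close> of an ideal of R.\<close>
definition ext_ideal :: "'r::comm_ring_1 set \<Rightarrow> 'r poly set" where
  "ext_ideal D = {\<theta>. \<forall>n. coeff \<theta> n \<in> D}"

definition ann :: "('r::comm_ring_1, 'm) skew_mod \<Rightarrow> 'r poly set \<Rightarrow> 'm set" where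
  "ann M B = {g\<in>carrier M. \<forall>\<theta>\<in>B. act M \<theta> g = zero M}"

definition grann :: "('r::comm_ring_1, 'm) skew_mod \<Rightarrow> 'm set \<Rightarrow> 'r poly set" where
  "grann M N = {\<theta>. \<forall>i. \<forall>g\<in>N. act M (monom (coeff \<theta> i) i) g = zero M}"

text \<open>Graded two-sided ideals \<open>\<Oplus>_n \<bb>_n x^n\<close> of R[x,f], with \<open>(\<bb>_n)\<close> an ascending
  sequence of ideals of R (exactly the graded two-sided ideals).\<close>
definition graded_two_sided_ideal :: "'r::comm_ring_1 poly set \<Rightarrow> bool" where
  "graded_two_sided_ideal B \<longleftrightarrow>
     (\<exists>b :: nat \<Rightarrow> 'r set. (\<forall>n. is_ideal (b n)) \<and> (\<forall>n. b n \<subseteq> b (Suc n)) \<and>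
        B = {\<theta>. \<forall>n. coeff \<theta> n \<in> b n})"

definition special_ann_submodule :: "('r::comm_ring_1, 'm) skew_mod \<Rightarrow> 'm set \<Rightarrow> bool" where
  "special_ann_submodule M S \<longleftrightarrow> (\<exists>B. graded_two_sided_ideal B \<and> S = ann M B)"

definition coset :: "('r, 'm) skew_mod \<Rightarrow> 'm \<Rightarrow> 'm set \<Rightarrow> 'm set" where
  "coset M g L = {add M g l | l. l \<in> L}"

definition quot_mod :: "('r::comm_ring_1, 'm) skew_mod \<Rightarrow> 'm set \<Rightarrow> ('r, 'm set) skew_mod" where
  "quot_mod M L =
     \<lparr> carrier = (\<lambda>g. coset M g L) ` carrier M,
       zero = L,
       add = (\<lambda>A B. {add M a b | a b. a \<in> A \<and> b \<in> B}),
       smult = (\<lambda>r A. {add M (smult M r a) l | a l. a \<in> A \<and> l \<in> L}),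
       frob = (\<lambda>A. {add M (frob M a) l | a l. a \<in> A \<and> l \<in> L}) \<rparr>"

definition quot_sub :: "('r::comm_ring_1, 'm) skew_mod \<Rightarrow> 'm set \<Rightarrow> 'm set \<Rightarrow> 'm set set" where
  "quot_sub M L N = (\<lambda>g. coset M g L) ` N"

end

theory Submission
  imports Defs "HOL-Computational_Algebra.Primes"
begin


locale skm =
  fixes p :: nat and M :: "('r::comm_ring_1, 'm) skew_mod"
  assumes sm: "skew_module p M"
begin

lemma S: "zero M \<in> carrier M"
     "\<forall>g\<in>carrier M. \<forall>h\<in>carrier M. add M g h \<in> carrier M"
     "\<forall>g\<in>carrier M. \<forall>h\<in>carrier M. \<forall>k\<in>carrier M. add M (add M g h) k = add M g (add M h k)"
     "\<forall>g\<in>carrier M. \<forall>h\<in>carrier M. add M g h = add M h g"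
     "\<forall>g\<in>carrier M. add M (zero M) g = g"
     "\<forall>g\<in>carrier M. \<exists>h\<in>carrier M. add M g h = zero M"
     "\<forall>r. \<forall>g\<in>carrier M. smult M r g \<in> carrier M"
     "\<forall>r s. \<forall>g\<in>carrier M. smult M (r + s) g = add M (smult M r g) (smult M s g)"
     "\<forall>r. \<forall>g\<in>carrier M. \<forall>h\<in>carrier M. smult M r (add M g h) = add M (smult M r g) (smult M r h)"
     "\<forall>r s. \<forall>g\<in>carrier M. smult M (r * s) g = smult M r (smult M s g)"
     "\<forall>g\<in>carrier M. smult M 1 g = g"
     "\<forall>g\<in>carrier M. frob M g \<in> carrier M"
     "\<forall>g\<in>carrier M. \<forall>h\<in>carrier M. frob M (add M g h) = add M (frob M g) (frob M h)"
     "\<forall>r. \<forall>g\<in>carrier M. frob M (smult M r g) = smult M (r ^ p) (frob M g)"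
  using sm unfolding skew_module_def by auto

lemma zero_cl: "zero M \<in> carrier M" using S by blast
lemma add_cl: "g \<in> carrier M \<Longrightarrow> h \<in> carrier M \<Longrightarrow> add M g h \<in> carrier M"
  using S(2) by metis
lemma add_assoc: "g \<in> carrier M \<Longrightarrow> h \<in> carrier M \<Longrightarrow> k \<in> carrier M \<Longrightarrow> add M (add M g h) k = add M g (add M h k)"
  using S(3) by metis
lemma add_comm: "g \<in> carrier M \<Longrightarrow> h \<in> carrier M \<Longrightarrow> add M g h = add M h g"
  using S(4) by metis
lemma add_zl: "g \<in> carrier M \<Longrightarrow> add M (zero M) g = g"
  using S(5) by metis
lemma add_zr: "g \<in> carrier M \<Longrightarrow> add M g (zero M) = g"
  using add_zl add_comm zero_cl by metis
lemma inv_ex: "g \<in> carrier M \<Longrightarrow> \<exists>h\<in>carrier M. add M g h = zero M"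
  using S(6) by metis
lemma sm_cl: "g \<in> carrier M \<Longrightarrow> smult M r g \<in> carrier M"
  using S(7) by metis
lemma sm_dl: "g \<in> carrier M \<Longrightarrow> smult M (r + s) g = add M (smult M r g) (smult M s g)"
  using S(8) by metis
lemma sm_dr: "g \<in> carrier M \<Longrightarrow> h \<in> carrier M \<Longrightarrow> smult M r (add M g h) = add M (smult M r g) (smult M r h)"
  using S(9) by metis
lemma sm_assoc: "g \<in> carrier M \<Longrightarrow> smult M r (smult M s g) = smult M (r * s) g"
  using S(10) by metis
lemma sm_one: "g \<in> carrier M \<Longrightarrow> smult M 1 g = g"
  using S(11) by metis
lemma fr_cl: "g \<in> carrier M \<Longrightarrow> frob M g \<in> carrier M"
  using S(12) by metis
lemma fr_add: "g \<in> carrier M \<Longrightarrow> h \<in> carrier M \<Longrightarrow> frob M (add M g h) = add M (frob M g) (frob M h)"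
  using S(13) by metis
lemma fr_sm: "g \<in> carrier M \<Longrightarrow> frob M (smult M r g) = smult M (r ^ p) (frob M g)"
  using S(14) by metis

lemma idem_zero: assumes "a \<in> carrier M" "add M a a = a" shows "a = zero M"
proof -
  obtain b where b: "b \<in> carrier M" "add M a b = zero M" using inv_ex assms(1) by blast
  have "add M (add M a a) b = add M a b" using assms by simp
  then have "add M a (zero M) = zero M" using add_assoc[OF assms(1) assms(1) b(1)] b by simp
  then show ?thesis using add_zr assms(1) by simp
qed

lemma sm_zr: "smult M r (zero M) = zero M"
  using idem_zero[OF sm_cl[OF zero_cl]] sm_dr[OF zero_cl zero_cl] add_zl[OF zero_cl] by metis

lemma sm_zl: "g \<in> carrier M \<Longrightarrow> smult M 0 g = zero M"
  using idem_zero[OF sm_cl] sm_dl[of g 0 0] by simp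

lemma fr_zero: "frob M (zero M) = zero M"
  using idem_zero[OF fr_cl[OF zero_cl]] fr_add[OF zero_cl zero_cl] add_zl[OF zero_cl] by metis

lemma frp_cl: "g \<in> carrier M \<Longrightarrow> (frob M ^^ n) g \<in> carrier M"
  by (induction n) (auto intro: fr_cl)

lemma frp_add: "g \<in> carrier M \<Longrightarrow> h \<in> carrier M \<Longrightarrow>
   (frob M ^^ n) (add M g h) = add M ((frob M ^^ n) g) ((frob M ^^ n) h)"
  by (induction n) (auto simp: fr_add frp_cl)

lemma frp_sm: "g \<in> carrier M \<Longrightarrow> (frob M ^^ n) (smult M r g) = smult M (r ^ (p ^ n)) ((frob M ^^ n) g)"
proof (induction n)
  case 0 then show ?case by simp
next
  case (Suc n)
  then show ?case by (simp add: fr_sm frp_cl power_mult[symmetric] mult.commute)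
qed

lemma frp_zero: "(frob M ^^ n) (zero M) = zero M"
  by (induction n) (auto simp: fr_zero)

lemma K: "g \<in> carrier M \<Longrightarrow>
  smult M s ((frob M ^^ j) (smult M r ((frob M ^^ n) g))) = smult M (s * r ^ (p ^ j)) ((frob M ^^ (j + n)) g)"
  by (simp add: frp_sm frp_cl sm_assoc funpow_add)

lemma neg: "g \<in> carrier M \<Longrightarrow> add M g (smult M (-1) g) = zero M"
  using sm_dl[of g 1 "-1"] sm_one sm_zl by simp

lemma foldr_cl: "set xs \<subseteq> P \<Longrightarrow> z \<in> P \<Longrightarrow> (\<forall>a\<in>P. \<forall>b\<in>P. add M a b \<in> P) \<Longrightarrow> foldr (add M) xs z \<in> P"
  by (induction xs) auto

lemma foldr_zeros: "\<forall>x\<in>set xs. x = zero M \<Longrightarrow> z \<in> carrier M \<Longrightarrow> foldr (add M) xs z = z"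
  by (induction xs) (auto simp: add_zl)

lemma act_monom: assumes g: "g \<in> carrier M" shows "act M (monom r i) g = smult M r ((frob M ^^ i) g)"
proof (cases "r = 0")
  case True
  then show ?thesis using g by (simp add: act_def sm_zl add_zr frp_cl sm_cl add_zl zero_cl)
next
  case False
  then have d: "degree (monom r i) = i" by (simp add: degree_monom_eq)
  have "act M (monom r i) g = foldr (add M) (map (\<lambda>j. smult M (coeff (monom r i) j) ((frob M ^^ j) g)) [0..<i])
           (foldr (add M) [smult M r ((frob M ^^ i) g)] (zero M))"
    unfolding act_def d by simp
  also have "\<dots> = foldr (add M) (map (\<lambda>j. smult M (coeff (monom r i) j) ((frob M ^^ j) g)) [0..<i])
           (smult M r ((frob M ^^ i) g))"
    using g by (simp add: add_zr sm_cl frp_cl)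
  also have "\<dots> = smult M r ((frob M ^^ i) g)"
    by (rule foldr_zeros) (auto simp: coeff_monom sm_zl frp_cl g sm_cl)
  finally show ?thesis .
qed

lemma act_in: assumes "zero M \<in> P" "\<forall>a\<in>P. \<forall>b\<in>P. add M a b \<in> P"
  "\<forall>i. smult M (coeff \<theta> i) ((frob M ^^ i) g) \<in> P"
  shows "act M \<theta> g \<in> P"
  unfolding act_def by (rule foldr_cl) (use assms in auto)

lemma act_cl: "g \<in> carrier M \<Longrightarrow> act M \<theta> g \<in> carrier M"
  by (rule act_in) (auto simp: zero_cl add_cl sm_cl frp_cl)

lemma lemA:
  assumes "zero M \<in> P" "\<forall>a\<in>P. \<forall>b\<in>P. add M a b \<in> P" "\<forall>n. 0 \<in> d n" "g \<in> carrier M"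
  shows "(\<forall>\<theta>. (\<forall>n. coeff \<theta> n \<in> d n) \<longrightarrow> act M \<theta> g \<in> P) \<longleftrightarrow>
         (\<forall>n. \<forall>s\<in>d n. smult M s ((frob M ^^ n) g) \<in> P)"
proof
  assume h: "\<forall>\<theta>. (\<forall>n. coeff \<theta> n \<in> d n) \<longrightarrow> act M \<theta> g \<in> P"
  show "\<forall>n. \<forall>s\<in>d n. smult M s ((frob M ^^ n) g) \<in> P"
  proof (intro allI ballI)
    fix n s assume s: "s \<in> d n"
    have "\<forall>m. coeff (monom s n) m \<in> d m" using s assms(3) by (auto simp: coeff_monom)
    then have "act M (monom s n) g \<in> P" using h by blast
    then show "smult M s ((frob M ^^ n) g) \<in> P" using act_monom assms(4) by simp
  qed
next
  assume h: "\<forall>n. \<forall>s\<in>d n. smult M s ((frob M ^^ n) g) \<in> P"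
  show "\<forall>\<theta>. (\<forall>n. coeff \<theta> n \<in> d n) \<longrightarrow> act M \<theta> g \<in> P"
    using act_in[OF assms(1,2)] h by blast
qed

definition annG :: "(nat \<Rightarrow> 'r set) \<Rightarrow> 'm set" where
  "annG d = {g\<in>carrier M. \<forall>n. \<forall>s\<in>d n. smult M s ((frob M ^^ n) g) = zero M}"

lemma ann_annG: assumes "\<forall>n. 0 \<in> d n"
  shows "ann M {\<theta>. \<forall>n. coeff \<theta> n \<in> d n} = annG d"
proof -
  have "\<And>g. g \<in> carrier M \<Longrightarrow> (\<forall>\<theta>\<in>{\<theta>. \<forall>n. coeff \<theta> n \<in> d n}. act M \<theta> g = zero M) \<longleftrightarrow>
     (\<forall>n. \<forall>s\<in>d n. smult M s ((frob M ^^ n) g) = zero M)"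
    using lemA[of "{zero M}" d] assms by (auto simp: add_zl zero_cl)
  then show ?thesis unfolding ann_def annG_def by blast
qed

lemma ext_eq: "ext_ideal D = {\<theta>. \<forall>n. coeff \<theta> n \<in> (\<lambda>_. D) n}"
  by (simp add: ext_ideal_def)

lemma ann_ext: "0 \<in> D \<Longrightarrow> ann M (ext_ideal D) = annG (\<lambda>_. D)"
  unfolding ext_eq by (rule ann_annG) simp

lemma grann_eq: "X \<subseteq> carrier M \<Longrightarrow>
  grann M X = {\<theta>. \<forall>i. \<forall>g\<in>X. smult M (coeff \<theta> i) ((frob M ^^ i) g) = zero M}"
  unfolding grann_def using act_monom subsetD by (smt (verit) Collect_cong)

lemma annG_anti: "(\<And>n. d n \<subseteq> e n) \<Longrightarrow> annG e \<subseteq> annG d"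
  unfolding annG_def by blast

lemma annG_sub: "annG d \<subseteq> carrier M" unfolding annG_def by blast

lemma annG_zero: "zero M \<in> annG d"
  unfolding annG_def by (simp add: zero_cl frp_zero sm_zr)

lemma annG_add: "g \<in> annG d \<Longrightarrow> h \<in> annG d \<Longrightarrow> add M g h \<in> annG d"
  unfolding annG_def by (auto simp: add_cl frp_add sm_dr frp_cl add_zl zero_cl)

lemma annG_sm: assumes "\<And>n. is_ideal (d n)" "g \<in> annG d" shows "smult M r g \<in> annG d"
proof -
  have "\<And>n s. s \<in> d n \<Longrightarrow> s * r ^ (p ^ n) \<in> d n"
    using assms(1) unfolding is_ideal_def by (metis mult.commute)
  then show ?thesis using assms(2) unfolding annG_def
    by (auto simp: sm_cl frp_sm sm_assoc frp_cl)
qed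

lemma annG_fr: assumes "\<And>n. d n \<subseteq> d (Suc n)" "g \<in> annG d" shows "frob M g \<in> annG d"
proof -
  have "\<And>n. (frob M ^^ n) (frob M g) = (frob M ^^ Suc n) g" by (simp add: funpow_swap1)
  moreover have "\<And>n s. s \<in> d n \<Longrightarrow> smult M s ((frob M ^^ Suc n) g) = zero M"
    using assms unfolding annG_def by blast
  ultimately show ?thesis using assms(2) unfolding annG_def by (auto simp: fr_cl)
qed

lemma tf_pow: assumes "x_torsion_free M" "h \<in> carrier M" "(frob M ^^ e) h = zero M" shows "h = zero M"
  using assms(2,3)
proof (induction e arbitrary: h)
  case 0 then show ?case by simp
next
  case (Suc e)
  have "(frob M ^^ e) (frob M h) = zero M" using Suc.prems by (simp add: funpow_swap1)
  then have "frob M h = zero M" using Suc.IH fr_cl Suc.prems by blast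
  then show ?case using assms(1) Suc.prems unfolding x_torsion_free_def by blast
qed

lemma trick: assumes "x_torsion_free M" "g \<in> carrier M"
  "smult M (t ^ q) ((frob M ^^ (e + n)) g) = zero M" "q \<le> p ^ e"
  shows "smult M t ((frob M ^^ n) g) = zero M"
proof -
  have "(frob M ^^ e) (smult M t ((frob M ^^ n) g)) = smult M (t ^ (p ^ e)) ((frob M ^^ (e + n)) g)"
    using assms(2) by (simp add: frp_sm frp_cl funpow_add)
  also have "t ^ (p ^ e) = t ^ (p ^ e - q) * t ^ q" using assms(4) by (simp add: power_add[symmetric])
  also have "smult M (t ^ (p ^ e - q) * t ^ q) ((frob M ^^ (e + n)) g) = zero M"
    using assms(2,3) by (simp add: sm_assoc[symmetric] frp_cl sm_zr)
  finally show ?thesis using tf_pow[OF assms(1)] assms(2) by (simp add: sm_cl frp_cl)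
qed

end



locale skq = skm p M for p and M :: "('r::comm_ring_1, 'm) skew_mod" +
  fixes L :: "'m set"
  assumes L_sub: "L \<subseteq> carrier M" and L_zero: "zero M \<in> L"
    and L_add: "\<And>g h. g \<in> L \<Longrightarrow> h \<in> L \<Longrightarrow> add M g h \<in> L"
    and L_sm: "\<And>r g. g \<in> L \<Longrightarrow> smult M r g \<in> L"
    and L_fr: "\<And>g. g \<in> L \<Longrightarrow> frob M g \<in> L"
begin

abbreviation "cs g \<equiv> coset M g L"
abbreviation "Q \<equiv> quot_mod M L"

lemma LC: "l \<in> L \<Longrightarrow> l \<in> carrier M" using L_sub by blast

lemma L_frp: "g \<in> L \<Longrightarrow> (frob M ^^ n) g \<in> L"
  by (induction n) (auto intro: L_fr)

lemma cs_self: "g \<in> carrier M \<Longrightarrow> g \<in> cs g"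
  unfolding coset_def by (rule CollectI, rule exI[of _ "zero M"]) (simp add: add_zr L_zero)

lemma cs_eq_L: assumes h: "h \<in> carrier M" shows "cs h = L \<longleftrightarrow> h \<in> L"
proof
  assume "cs h = L" then show "h \<in> L" using cs_self h by blast
next
  assume hL: "h \<in> L"
  show "cs h = L"
  proof
    show "cs h \<subseteq> L" unfolding coset_def using hL L_add by blast
    show "L \<subseteq> cs h"
    proof
      fix l assume l: "l \<in> L"
      have m: "smult M (-1) h \<in> L" using L_sm hL by blast
      have "add M h (add M (smult M (-1) h) l) = add M (add M h (smult M (-1) h)) l"
        using add_assoc[OF h sm_cl[OF h, of "-1"] LC[OF l]] by simp
      also have "\<dots> = l" using neg[OF h] add_zl LC[OF l] by simp
      finally have "add M h (add M (smult M (-1) h) l) = l" .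
      moreover have "add M (smult M (-1) h) l \<in> L" using m l L_add by blast
      ultimately show "l \<in> cs h" unfolding coset_def
        by (intro CollectI exI[of _ "add M (smult M (-1) h) l"] conjI) simp_all
    qed
  qed
qed

lemma Qa: "add Q A B = {add M a b | a b. a \<in> A \<and> b \<in> B}" by (simp add: quot_mod_def)
lemma Qs: "smult Q r A = {add M (smult M r a) l | a l. a \<in> A \<and> l \<in> L}" by (simp add: quot_mod_def)
lemma Qf: "frob Q A = {add M (frob M a) l | a l. a \<in> A \<and> l \<in> L}" by (simp add: quot_mod_def)
lemma Q_carrier: "carrier Q = cs ` carrier M" by (simp add: quot_mod_def)
lemma Q_zero: "zero Q = L" by (simp add: quot_mod_def)
lemma Q_zero': "zero Q = cs (zero M)" using cs_eq_L[OF zero_cl] L_zero Q_zero by simp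

lemma Q_add: assumes g: "g \<in> carrier M" and h: "h \<in> carrier M"
  shows "add Q (cs g) (cs h) = cs (add M g h)"
proof -
  have 1: "add M (add M g l) (add M h l') = add M (add M g h) (add M l l')" if "l \<in> L" "l' \<in> L" for l l'
  proof -
    have lc: "l \<in> carrier M" "l' \<in> carrier M" using that LC by auto
    have "add M (add M g l) (add M h l') = add M g (add M l (add M h l'))"
      using add_assoc g h lc add_cl by simp
    also have "add M l (add M h l') = add M (add M l h) l'"
      using add_assoc g h lc add_cl by simp
    also have "add M l h = add M h l" using add_comm h lc by simp
    also have "add M (add M h l) l' = add M h (add M l l')"
      using add_assoc g h lc add_cl by simp
    also have "add M g (add M h (add M l l')) = add M (add M g h) (add M l l')"
      using add_assoc g h lc add_cl by simp
    finally show ?thesis .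
  qed
  have 2: "add M (add M g h) l = add M (add M g l) h" if "l \<in> L" for l
  proof -
    have lc: "l \<in> carrier M" using LC that by auto
    have "add M (add M g h) l = add M g (add M h l)" using add_assoc g h lc by simp
    also have "add M h l = add M l h" using add_comm h lc by simp
    also have "add M g (add M l h) = add M (add M g l) h" using add_assoc g h lc by simp
    finally show ?thesis .
  qed
  show ?thesis
  proof
    show "add Q (cs g) (cs h) \<subseteq> cs (add M g h)"
    proof
      fix x assume "x \<in> add Q (cs g) (cs h)"
      then obtain l l' where l: "l \<in> L" "l' \<in> L" "x = add M (add M g l) (add M h l')"
        unfolding coset_def Qa Qs Qf by blast
      then have "x = add M (add M g h) (add M l l')" using 1 by simp
      then show "x \<in> cs (add M g h)" unfolding coset_def using l L_add by blast
    qed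
    show "cs (add M g h) \<subseteq> add Q (cs g) (cs h)"
    proof
      fix x assume "x \<in> cs (add M g h)"
      then obtain l where l: "l \<in> L" "x = add M (add M g h) l" unfolding coset_def by blast
      have "add M g l \<in> cs g" using l unfolding coset_def by blast
      moreover have "h \<in> cs h" using cs_self h by blast
      moreover have "x = add M (add M g l) h" using l 2 by simp
      ultimately show "x \<in> add Q (cs g) (cs h)" unfolding Qa Qs Qf by blast
    qed
  qed
qed

lemma Q_sm: assumes g: "g \<in> carrier M"
  shows "smult Q r (cs g) = cs (smult M r g)"
proof
  show "smult Q r (cs g) \<subseteq> cs (smult M r g)"
  proof
    fix x assume "x \<in> smult Q r (cs g)"
    then obtain l l' where l: "l \<in> L" "l' \<in> L" "x = add M (smult M r (add M g l)) l'"
      unfolding coset_def Qa Qs Qf by blast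
    then have "x = add M (smult M r g) (add M (smult M r l) l')"
      using sm_dr add_assoc g LC sm_cl by simp
    then show "x \<in> cs (smult M r g)" unfolding coset_def using l L_add L_sm by blast
  qed
  show "cs (smult M r g) \<subseteq> smult Q r (cs g)"
  proof
    fix x assume "x \<in> cs (smult M r g)"
    then obtain l where "l \<in> L" "x = add M (smult M r g) l" unfolding coset_def by blast
    then show "x \<in> smult Q r (cs g)" using cs_self[OF g] unfolding Qa Qs Qf by blast
  qed
qed

lemma Q_fr: assumes g: "g \<in> carrier M"
  shows "frob Q (cs g) = cs (frob M g)"
proof
  show "frob Q (cs g) \<subseteq> cs (frob M g)"
  proof
    fix x assume "x \<in> frob Q (cs g)"
    then obtain l l' where l: "l \<in> L" "l' \<in> L" "x = add M (frob M (add M g l)) l'"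
      unfolding coset_def Qa Qs Qf by blast
    then have "x = add M (frob M g) (add M (frob M l) l')"
      using fr_add add_assoc g LC fr_cl by simp
    then show "x \<in> cs (frob M g)" unfolding coset_def using l L_add L_fr by blast
  qed
  show "cs (frob M g) \<subseteq> frob Q (cs g)"
  proof
    fix x assume "x \<in> cs (frob M g)"
    then obtain l where "l \<in> L" "x = add M (frob M g) l" unfolding coset_def by blast
    then show "x \<in> frob Q (cs g)" using cs_self[OF g] unfolding Qa Qs Qf by blast
  qed
qed

lemma Q_frp: "g \<in> carrier M \<Longrightarrow> (frob Q ^^ n) (cs g) = cs ((frob M ^^ n) g)"
  by (induction n) (auto simp: Q_fr frp_cl)

lemma Q_foldr: "set xs \<subseteq> carrier M \<Longrightarrow>
   foldr (add Q) (map (\<lambda>x. cs x) xs) (cs (zero M)) = cs (foldr (add M) xs (zero M))"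
proof (induction xs)
  case Nil then show ?case by simp
next
  case (Cons a xs)
  have "foldr (add M) xs (zero M) \<in> carrier M"
    using Cons.prems by (intro foldr_cl) (auto simp: zero_cl add_cl)
  then show ?case using Cons by (simp add: Q_add)
qed

lemma Q_act: assumes g: "g \<in> carrier M" shows "act Q \<theta> (cs g) = cs (act M \<theta> g)"
proof -
  let ?xs = "[0..<Suc (degree \<theta>)]"
  have "map (\<lambda>i. smult Q (coeff \<theta> i) ((frob Q ^^ i) (cs g))) ?xs =
        map (\<lambda>x. cs x) (map (\<lambda>i. smult M (coeff \<theta> i) ((frob M ^^ i) g)) ?xs)"
    using g by (simp add: Q_frp Q_sm frp_cl)
  moreover have "set (map (\<lambda>i. smult M (coeff \<theta> i) ((frob M ^^ i) g)) ?xs) \<subseteq> carrier M"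
    using g by (auto simp: sm_cl frp_cl)
  ultimately show ?thesis unfolding act_def Q_zero' by (simp only: Q_foldr)
qed

definition PL :: "(nat \<Rightarrow> 'r set) \<Rightarrow> 'm set" where
  "PL d = {g\<in>carrier M. \<forall>n. \<forall>s\<in>d n. smult M s ((frob M ^^ n) g) \<in> L}"

lemma ann_Q: assumes "\<forall>n. 0 \<in> d n"
  shows "ann Q {\<theta>. \<forall>n. coeff \<theta> n \<in> d n} = cs ` PL d"
proof -
  have key: "(\<forall>\<theta>\<in>{\<theta>. \<forall>n. coeff \<theta> n \<in> d n}. act Q \<theta> (cs g) = zero Q) \<longleftrightarrow> g \<in> PL d"
    if g: "g \<in> carrier M" for g
  proof -
    have "(\<forall>\<theta>\<in>{\<theta>. \<forall>n. coeff \<theta> n \<in> d n}. act Q \<theta> (cs g) = zero Q) \<longleftrightarrow>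
          (\<forall>\<theta>. (\<forall>n. coeff \<theta> n \<in> d n) \<longrightarrow> act M \<theta> g \<in> L)"
      using g by (simp add: Q_act Q_zero cs_eq_L act_cl)
    also have "\<dots> \<longleftrightarrow> (\<forall>n. \<forall>s\<in>d n. smult M s ((frob M ^^ n) g) \<in> L)"
      by (rule lemA) (use assms g L_zero L_add in auto)
    finally show ?thesis unfolding PL_def using g by simp
  qed
  show ?thesis
  proof
    show "ann Q {\<theta>. \<forall>n. coeff \<theta> n \<in> d n} \<subseteq> cs ` PL d"
    proof
      fix A assume A: "A \<in> ann Q {\<theta>. \<forall>n. coeff \<theta> n \<in> d n}"
      then obtain g where g: "g \<in> carrier M" "A = cs g" unfolding ann_def Q_carrier by blast
      then have "g \<in> PL d" using key A unfolding ann_def by blast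
      then show "A \<in> cs ` PL d" using g by blast
    qed
    show "cs ` PL d \<subseteq> ann Q {\<theta>. \<forall>n. coeff \<theta> n \<in> d n}"
    proof
      fix A assume "A \<in> cs ` PL d"
      then obtain g where g: "g \<in> PL d" "A = cs g" by blast
      then have gc: "g \<in> carrier M" unfolding PL_def by blast
      then show "A \<in> ann Q {\<theta>. \<forall>n. coeff \<theta> n \<in> d n}"
        using key g unfolding ann_def Q_carrier by blast
    qed
  qed
qed

lemma grann_Q: assumes "X \<subseteq> carrier M"
  shows "grann Q (cs ` X) = {\<theta>. \<forall>i. \<forall>g\<in>X. smult M (coeff \<theta> i) ((frob M ^^ i) g) \<in> L}"
proof -
  have "act Q (monom r i) (cs g) = zero Q \<longleftrightarrow> smult M r ((frob M ^^ i) g) \<in> L" if g: "g \<in> X" for r i g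
  proof -
    have gc: "g \<in> carrier M" using g assms by blast
    have "act Q (monom r i) (cs g) = cs (smult M r ((frob M ^^ i) g))"
      using gc by (simp add: Q_act act_monom)
    then show ?thesis using cs_eq_L[OF sm_cl[OF frp_cl[OF gc]]] Q_zero by simp
  qed
  then show ?thesis unfolding grann_def by auto
qed

lemma cs_sat: assumes "X \<subseteq> carrier M" "L \<subseteq> X" "\<And>a b. a \<in> X \<Longrightarrow> b \<in> X \<Longrightarrow> add M a b \<in> X"
  "g \<in> carrier M" "cs g \<in> cs ` X" shows "g \<in> X"
proof -
  obtain x where x: "x \<in> X" "cs g = cs x" using assms(5) by blast
  then have "g \<in> cs x" using cs_self assms(4) by blast
  then obtain l where l: "l \<in> L" "g = add M x l" unfolding coset_def by blast
  have "l \<in> X" using assms(2) l(1) by (rule subsetD)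
  then show ?thesis using assms(3)[OF x(1)] l(2) by simp
qed

lemma img_inj: assumes "X \<subseteq> carrier M" "L \<subseteq> X" "\<And>a b. a \<in> X \<Longrightarrow> b \<in> X \<Longrightarrow> add M a b \<in> X"
  "Y \<subseteq> carrier M" "L \<subseteq> Y" "\<And>a b. a \<in> Y \<Longrightarrow> b \<in> Y \<Longrightarrow> add M a b \<in> Y"
  "cs ` X = cs ` Y" shows "X = Y"
proof
  show "X \<subseteq> Y"
  proof
    fix x assume x: "x \<in> X"
    have "x \<in> carrier M" using assms(1) x by (rule subsetD)
    moreover have "cs x \<in> cs ` Y" using assms(7) x by (metis imageI)
    ultimately show "x \<in> Y" using cs_sat[of Y x, OF assms(4,5)] assms(6) by blast
  qed
  show "Y \<subseteq> X"
  proof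
    fix x assume x: "x \<in> Y"
    have "x \<in> carrier M" using assms(4) x by (rule subsetD)
    moreover have "cs x \<in> cs ` X" using assms(7) x by (metis imageI)
    ultimately show "x \<in> X" using cs_sat[of X x, OF assms(1,2)] assms(3) by blast
  qed
qed

lemma PL_sub: "PL d \<subseteq> carrier M" unfolding PL_def by blast
lemma L_PL: "L \<subseteq> PL d"
proof
  fix g assume g: "g \<in> L"
  have "smult M s ((frob M ^^ n) g) \<in> L" for n s using L_sm L_frp g by blast
  then show "g \<in> PL d" unfolding PL_def using LC g by blast
qed
lemma PL_add: assumes a: "a \<in> PL d" and b: "b \<in> PL d" shows "add M a b \<in> PL d"
proof -
  have ac: "a \<in> carrier M" and bc: "b \<in> carrier M" using a b unfolding PL_def by auto
  have "smult M s ((frob M ^^ n) (add M a b)) \<in> L" if "s \<in> d n" for n s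
  proof -
    have "smult M s ((frob M ^^ n) (add M a b)) =
          add M (smult M s ((frob M ^^ n) a)) (smult M s ((frob M ^^ n) b))"
      using ac bc by (simp add: frp_add sm_dr frp_cl)
    moreover have "smult M s ((frob M ^^ n) a) \<in> L" "smult M s ((frob M ^^ n) b) \<in> L"
      using a b that unfolding PL_def by auto
    ultimately show ?thesis using L_add by simp
  qed
  then show ?thesis unfolding PL_def using ac bc add_cl by blast
qed

end



lemma ideal_0: "is_ideal I \<Longrightarrow> 0 \<in> I" unfolding is_ideal_def by blast
lemma ideal_add: "is_ideal I \<Longrightarrow> x \<in> I \<Longrightarrow> y \<in> I \<Longrightarrow> x + y \<in> I" unfolding is_ideal_def by blast
lemma ideal_ml: "is_ideal I \<Longrightarrow> x \<in> I \<Longrightarrow> r * x \<in> I" unfolding is_ideal_def by blast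
lemma ideal_mr: assumes "is_ideal I" "x \<in> I" shows "x * r \<in> I"
proof -
  have "r * x \<in> I" using ideal_ml[OF assms] .
  then show ?thesis by (simp add: mult.commute)
qed
lemma ideal_pow: assumes "is_ideal I" "x \<in> I" "1 \<le> k" shows "x ^ k \<in> I"
proof -
  obtain j where "k = Suc j" using assms(3) by (cases k) auto
  then have "x ^ k = x * x ^ j" by simp
  then show ?thesis using ideal_mr[OF assms(1,2)] by simp
qed
lemma ideal_int: "is_ideal I \<Longrightarrow> is_ideal J \<Longrightarrow> is_ideal (I \<inter> J)" unfolding is_ideal_def by blast
lemma colon_ideal: assumes "is_ideal B" shows "is_ideal (ideal_colon B A)"
proof -
  have "0 \<in> ideal_colon B A" unfolding ideal_colon_def using ideal_0[OF assms] by simp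
  moreover have "x + y \<in> ideal_colon B A" if "x \<in> ideal_colon B A" "y \<in> ideal_colon B A" for x y
    using that ideal_add[OF assms] unfolding ideal_colon_def by (simp add: distrib_right)
  moreover have "r * x \<in> ideal_colon B A" if "x \<in> ideal_colon B A" for r x
    using that ideal_ml[OF assms] unfolding ideal_colon_def by (simp add: mult.assoc)
  ultimately show ?thesis unfolding is_ideal_def by blast
qed
lemma colon_0: "is_ideal B \<Longrightarrow> 0 \<in> ideal_colon B A" unfolding ideal_colon_def by (simp add: ideal_0)
lemma colon_self: "is_ideal B \<Longrightarrow> x \<in> B \<Longrightarrow> x \<in> ideal_colon B A"
  unfolding ideal_colon_def by (simp add: ideal_mr)
lemma colon_mono: "B \<subseteq> B' \<Longrightarrow> ideal_colon B A \<subseteq> ideal_colon B' A"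
  unfolding ideal_colon_def by blast
lemma prod_in: "s \<in> A \<Longrightarrow> c \<in> C \<Longrightarrow> s * c \<in> ideal_prod A C"
  unfolding ideal_prod_def by blast
lemma prod_sub: assumes "is_ideal A" "is_ideal C" shows "ideal_prod A C \<subseteq> A \<inter> C"
proof -
  have "is_ideal (A \<inter> C) \<and> (\<forall>a\<in>A. \<forall>c\<in>C. a * c \<in> A \<inter> C)"
    using ideal_int[OF assms] ideal_ml[OF assms(2)] ideal_mr[OF assms(1)] by blast
  then show ?thesis unfolding ideal_prod_def by blast
qed
lemma prod_0: "0 \<in> ideal_prod A C"
  unfolding ideal_prod_def using ideal_0 by blast

lemma mon_in:
  assumes "\<And>i g. g \<in> X \<Longrightarrow> P 0 i g"
  shows "(\<forall>i'. \<forall>g\<in>X. P (coeff (monom r i) i') i' g) \<longleftrightarrow> (\<forall>g\<in>X. P r i g)"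
proof
  assume h: "\<forall>i'. \<forall>g\<in>X. P (coeff (monom r i) i') i' g"
  show "\<forall>g\<in>X. P r i g"
  proof
    fix g assume "g \<in> X"
    then have "P (coeff (monom r i) i) i g" using h by blast
    then show "P r i g" by simp
  qed
next
  assume h: "\<forall>g\<in>X. P r i g"
  show "\<forall>i'. \<forall>g\<in>X. P (coeff (monom r i) i') i' g"
  proof (intro allI ballI)
    fix i' g assume g: "g \<in> X"
    show "P (coeff (monom r i) i') i' g"
    proof (cases "i = i'")
      case True then show ?thesis using h g by simp
    next
      case False then show ?thesis using assms g by simp
    qed
  qed
qed

locale skL = skm p M for p and M :: "('r::comm_ring_1, 'm) skew_mod" +
  fixes a :: "'r set"
  assumes a_id: "is_ideal a" and tf: "x_torsion_free M" and p2: "2 \<le> p"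
begin

definition LL where "LL = annG (\<lambda>_. a)"

sublocale q: skq p M LL
proof unfold_locales
  show "LL \<subseteq> carrier M" unfolding LL_def by (rule annG_sub)
  show "zero M \<in> LL" unfolding LL_def by (rule annG_zero)
  show "add M g h \<in> LL" if "g \<in> LL" "h \<in> LL" for g h using that unfolding LL_def by (rule annG_add)
  show "smult M r g \<in> LL" if "g \<in> LL" for r g using that unfolding LL_def by (intro annG_sm a_id)
  show "frob M g \<in> LL" if "g \<in> LL" for g using that unfolding LL_def by (intro annG_fr) auto
qed

lemma pm1: "1 \<le> p ^ m" using p2 by simp

lemma PLiff: assumes g: "g \<in> carrier M"
  shows "g \<in> q.PL d \<longleftrightarrow> (\<forall>n r m s. r \<in> d n \<longrightarrow> s \<in> a \<longrightarrow>
           smult M (s * r ^ (p ^ m)) ((frob M ^^ (m + n)) g) = zero M)"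
proof -
  have "g \<in> q.PL d \<longleftrightarrow> (\<forall>n. \<forall>r\<in>d n. smult M r ((frob M ^^ n) g) \<in> LL)"
    using g by (simp add: q.PL_def)
  also have "\<dots> \<longleftrightarrow> (\<forall>n r m s. r \<in> d n \<longrightarrow> s \<in> a \<longrightarrow>
           smult M (s * r ^ (p ^ m)) ((frob M ^^ (m + n)) g) = zero M)"
    using g unfolding LL_def annG_def by (auto simp: K sm_cl frp_cl)
  finally show ?thesis .
qed

lemma trick2: assumes g: "g \<in> carrier M" and "t \<in> a" "t \<in> d (Suc n)" "g \<in> q.PL d"
  shows "smult M t ((frob M ^^ n) g) = zero M"
proof -
  have "smult M (t * t ^ (p ^ 0)) ((frob M ^^ (0 + Suc n)) g) = zero M"
    using PLiff[OF g] assms by blast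
  then have "smult M (t ^ 2) ((frob M ^^ (1 + n)) g) = zero M" by (simp add: power2_eq_square)
  then show ?thesis by (rule trick[OF tf g]) (use p2 in simp)
qed

lemma part1: assumes b: "is_ideal b" "b \<subseteq> a"
  shows "annG (\<lambda>_. b) = q.PL (\<lambda>_. ideal_colon b a)"
proof
  show "annG (\<lambda>_. b) \<subseteq> q.PL (\<lambda>_. ideal_colon b a)"
  proof
    fix g assume g: "g \<in> annG (\<lambda>_. b)"
    then have gc: "g \<in> carrier M" using annG_sub by blast
    have "smult M (s * r ^ (p ^ m)) ((frob M ^^ (m + n)) g) = zero M"
      if "r \<in> ideal_colon b a" "s \<in> a" for n r m s
    proof -
      have "r ^ (p ^ m) \<in> ideal_colon b a" using ideal_pow[OF colon_ideal[OF b(1)] that(1) pm1] .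
      then have "s * r ^ (p ^ m) \<in> b" using that(2) unfolding ideal_colon_def by (simp add: mult.commute)
      then show ?thesis using g unfolding annG_def by blast
    qed
    then show "g \<in> q.PL (\<lambda>_. ideal_colon b a)" using PLiff[OF gc] by blast
  qed
  show "q.PL (\<lambda>_. ideal_colon b a) \<subseteq> annG (\<lambda>_. b)"
  proof
    fix g assume g: "g \<in> q.PL (\<lambda>_. ideal_colon b a)"
    then have gc: "g \<in> carrier M" using q.PL_sub by blast
    have "smult M t ((frob M ^^ n) g) = zero M" if "t \<in> b" for t n
      using trick2[OF gc _ _ g] that b colon_self by blast
    then show "g \<in> annG (\<lambda>_. b)" unfolding annG_def using gc by blast
  qed
qed

lemma part2: assumes c: "is_ideal c"
  shows "q.PL (\<lambda>_. c) = annG (\<lambda>_. a \<inter> c)" "annG (\<lambda>_. ideal_prod a c) = annG (\<lambda>_. a \<inter> c)"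
proof -
  have 1: "annG (\<lambda>_. ideal_prod a c) \<subseteq> q.PL (\<lambda>_. c)"
  proof
    fix g assume g: "g \<in> annG (\<lambda>_. ideal_prod a c)"
    then have gc: "g \<in> carrier M" using annG_sub by blast
    have "smult M (s * r ^ (p ^ m)) ((frob M ^^ (m + n)) g) = zero M"
      if "r \<in> c" "s \<in> a" for n r m s
    proof -
      have "r ^ (p ^ m) \<in> c" using ideal_pow[OF c that(1) pm1] .
      then have "s * r ^ (p ^ m) \<in> ideal_prod a c" using that(2) prod_in by blast
      then show ?thesis using g unfolding annG_def by blast
    qed
    then show "g \<in> q.PL (\<lambda>_. c)" using PLiff[OF gc] by blast
  qed
  have 2: "q.PL (\<lambda>_. c) \<subseteq> annG (\<lambda>_. a \<inter> c)"
  proof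
    fix g assume g: "g \<in> q.PL (\<lambda>_. c)"
    then have gc: "g \<in> carrier M" using q.PL_sub by blast
    have "smult M t ((frob M ^^ n) g) = zero M" if "t \<in> a \<inter> c" for t n
      using trick2[OF gc _ _ g] that by blast
    then show "g \<in> annG (\<lambda>_. a \<inter> c)" unfolding annG_def using gc by blast
  qed
  have 3: "annG (\<lambda>_. a \<inter> c) \<subseteq> annG (\<lambda>_. ideal_prod a c)"
    by (rule annG_anti) (use prod_sub[OF a_id c] in blast)
  show "q.PL (\<lambda>_. c) = annG (\<lambda>_. a \<inter> c)" using 1 2 3 by blast
  show "annG (\<lambda>_. ideal_prod a c) = annG (\<lambda>_. a \<inter> c)" using 1 2 3 by blast
qed

lemma special_G: "special_ann_submodule M S \<longleftrightarrow>
   (\<exists>d. (\<forall>n. is_ideal (d n)) \<and> (\<forall>n. d n \<subseteq> d (Suc n)) \<and> S = annG d)"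
proof
  assume "special_ann_submodule M S"
  then obtain b where b: "\<forall>n. is_ideal (b n)" "\<forall>n. b n \<subseteq> b (Suc n)"
    "S = ann M {\<theta>. \<forall>n. coeff \<theta> n \<in> b n}"
    unfolding special_ann_submodule_def graded_two_sided_ideal_def by blast
  moreover have "\<forall>n. 0 \<in> b n" using b(1) ideal_0 by blast
  ultimately have "S = annG b" using ann_annG by simp
  then show "\<exists>d. (\<forall>n. is_ideal (d n)) \<and> (\<forall>n. d n \<subseteq> d (Suc n)) \<and> S = annG d" using b by blast
next
  assume "\<exists>d. (\<forall>n. is_ideal (d n)) \<and> (\<forall>n. d n \<subseteq> d (Suc n)) \<and> S = annG d"
  then obtain b where b: "\<forall>n. is_ideal (b n)" "\<forall>n. b n \<subseteq> b (Suc n)" "S = annG b" by blast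
  moreover have "\<forall>n. 0 \<in> b n" using b(1) ideal_0 by blast
  ultimately have "S = ann M {\<theta>. \<forall>n. coeff \<theta> n \<in> b n}" using ann_annG by simp
  moreover have "graded_two_sided_ideal {\<theta>. \<forall>n. coeff \<theta> n \<in> b n}"
    unfolding graded_two_sided_ideal_def using b(1,2) by blast
  ultimately show "special_ann_submodule M S"
    unfolding special_ann_submodule_def by blast
qed

lemma special_Q: "special_ann_submodule q.Q T \<longleftrightarrow>
   (\<exists>d. (\<forall>n. is_ideal (d n)) \<and> (\<forall>n. d n \<subseteq> d (Suc n)) \<and> T = q.cs ` q.PL d)"
proof
  assume "special_ann_submodule q.Q T"
  then obtain b where b: "\<forall>n. is_ideal (b n)" "\<forall>n. b n \<subseteq> b (Suc n)"
    "T = ann q.Q {\<theta>. \<forall>n. coeff \<theta> n \<in> b n}"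
    unfolding special_ann_submodule_def graded_two_sided_ideal_def by blast
  moreover have "\<forall>n. 0 \<in> b n" using b(1) ideal_0 by blast
  ultimately have "T = q.cs ` q.PL b" using q.ann_Q by simp
  then show "\<exists>d. (\<forall>n. is_ideal (d n)) \<and> (\<forall>n. d n \<subseteq> d (Suc n)) \<and> T = q.cs ` q.PL d" using b by blast
next
  assume "\<exists>d. (\<forall>n. is_ideal (d n)) \<and> (\<forall>n. d n \<subseteq> d (Suc n)) \<and> T = q.cs ` q.PL d"
  then obtain b where b: "\<forall>n. is_ideal (b n)" "\<forall>n. b n \<subseteq> b (Suc n)" "T = q.cs ` q.PL b" by blast
  moreover have "\<forall>n. 0 \<in> b n" using b(1) ideal_0 by blast
  ultimately have "T = ann q.Q {\<theta>. \<forall>n. coeff \<theta> n \<in> b n}" using q.ann_Q by simp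
  moreover have "graded_two_sided_ideal {\<theta>. \<forall>n. coeff \<theta> n \<in> b n}"
    unfolding graded_two_sided_ideal_def using b(1,2) by blast
  ultimately show "special_ann_submodule q.Q T"
    unfolding special_ann_submodule_def by blast
qed

lemma part3a: assumes d: "\<And>n. is_ideal (d n)" "\<And>n. d n \<subseteq> d (Suc n)" and L: "LL \<subseteq> annG d"
  shows "annG d = q.PL (\<lambda>n. ideal_colon (d n) a)"
proof
  have mono: "d n \<subseteq> d n'" if "n \<le> n'" for n n' using lift_Suc_mono_le[of d, OF d(2) that] .
  show "annG d \<subseteq> q.PL (\<lambda>n. ideal_colon (d n) a)"
  proof
    fix g assume g: "g \<in> annG d"
    then have gc: "g \<in> carrier M" using annG_sub by blast
    have "smult M (s * r ^ (p ^ m)) ((frob M ^^ (m + n)) g) = zero M"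
      if "r \<in> ideal_colon (d n) a" "s \<in> a" for n r m s
    proof -
      have "r ^ (p ^ m) \<in> ideal_colon (d n) a" using ideal_pow[OF colon_ideal[OF d(1)] that(1) pm1] .
      then have "s * r ^ (p ^ m) \<in> d n" using that(2) unfolding ideal_colon_def by (simp add: mult.commute)
      then have "s * r ^ (p ^ m) \<in> d (m + n)" using mono[of n "m + n"] by auto
      then show ?thesis using g unfolding annG_def by blast
    qed
    then show "g \<in> q.PL (\<lambda>n. ideal_colon (d n) a)" using PLiff[OF gc] by blast
  qed
  show "q.PL (\<lambda>n. ideal_colon (d n) a) \<subseteq> annG d"
  proof
    fix g assume g: "g \<in> q.PL (\<lambda>n. ideal_colon (d n) a)"
    then have gc: "g \<in> carrier M" using q.PL_sub by blast
    have "smult M t ((frob M ^^ n) g) = zero M" if t: "t \<in> d n" for t n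
    proof -
      have "t \<in> ideal_colon (d (Suc n)) a" using colon_self[OF d(1)] t d(2) by blast
      then have "smult M t ((frob M ^^ Suc n) g) \<in> LL" using g unfolding q.PL_def by blast
      then have "smult M t ((frob M ^^ Suc n) g) \<in> annG d" using L by blast
      then have "smult M t ((frob M ^^ n) (smult M t ((frob M ^^ Suc n) g))) = zero M"
        using t unfolding annG_def by blast
      moreover have "smult M t ((frob M ^^ n) (smult M t ((frob M ^^ Suc n) g))) =
          smult M (t * t ^ (p ^ n)) ((frob M ^^ (n + Suc n)) g)" by (rule K[OF gc])
      moreover have "t * t ^ (p ^ n) = t ^ (p ^ n + 1)" by simp
      moreover have "n + Suc n = Suc n + n" by simp
      ultimately have "smult M (t ^ (p ^ n + 1)) ((frob M ^^ (Suc n + n)) g) = zero M"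
        by metis
      moreover have "p ^ n + 1 \<le> p ^ Suc n"
      proof -
        have "1 \<le> p ^ n" using pm1 .
        moreover have "2 * p ^ n \<le> p * p ^ n" using p2 by (rule mult_le_mono1)
        moreover have "p ^ Suc n = p * p ^ n" by simp
        ultimately show ?thesis by linarith
      qed
      ultimately show ?thesis by (rule trick[OF tf gc])
    qed
    then show "g \<in> annG d" unfolding annG_def using gc by blast
  qed
qed

lemma part3b: assumes d: "\<And>n. is_ideal (d n)" "\<And>n. d n \<subseteq> d (Suc n)"
  shows "annG (\<lambda>n. a \<inter> d n) = q.PL d"
proof
  have mono: "d n \<subseteq> d n'" if "n \<le> n'" for n n' using lift_Suc_mono_le[of d, OF d(2) that] .
  show "annG (\<lambda>n. a \<inter> d n) \<subseteq> q.PL d"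
  proof
    fix g assume g: "g \<in> annG (\<lambda>n. a \<inter> d n)"
    then have gc: "g \<in> carrier M" using annG_sub by blast
    have "smult M (s * r ^ (p ^ m)) ((frob M ^^ (m + n)) g) = zero M"
      if "r \<in> d n" "s \<in> a" for n r m s
    proof -
      have "r ^ (p ^ m) \<in> d n" using ideal_pow[OF d(1) that(1) pm1] .
      then have "s * r ^ (p ^ m) \<in> d (m + n)" using mono[of n "m + n"] ideal_ml[OF d(1)] by auto
      moreover have "s * r ^ (p ^ m) \<in> a" using ideal_mr[OF a_id that(2)] .
      ultimately show ?thesis using g unfolding annG_def by blast
    qed
    then show "g \<in> q.PL d" using PLiff[OF gc] by blast
  qed
  show "q.PL d \<subseteq> annG (\<lambda>n. a \<inter> d n)"
  proof
    fix g assume g: "g \<in> q.PL d"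
    then have gc: "g \<in> carrier M" using q.PL_sub by blast
    have "smult M t ((frob M ^^ n) g) = zero M" if "t \<in> a \<inter> d n" for t n
    proof -
      have "t \<in> d (Suc n)" using that d(2) by blast
      then show ?thesis using trick2[OF gc _ _ g] that by blast
    qed
    then show "g \<in> annG (\<lambda>n. a \<inter> d n)" unfolding annG_def using gc by blast
  qed
qed

end



theorem proposition3p3:
  fixes p :: nat
    and G :: "('r::comm_ring_1, 'm) skew_mod"
    and \<aa> :: "'r set"
    and L N :: "'m set"
  assumes "prime p" and "CHAR('r) = p" and "noetherian_ring TYPE('r)"
    and "skew_module p G" and "x_torsion_free G"
    and "is_ideal \<aa>"
    and L_def: "L = ann G (ext_ideal \<aa>)"
    and "r_submodule G N" and "L \<subseteq> N"
  shows
    "(\<forall>\<bb>. is_ideal \<bb> \<and> \<bb> \<subseteq> \<aa> \<and> N = ann G (ext_ideal \<bb>) \<longrightarrow>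
        quot_sub G L N = ann (quot_mod G L) (ext_ideal (ideal_colon \<bb> \<aa>)) \<and>
        (grann G N = ext_ideal \<bb> \<longrightarrow>
           grann (quot_mod G L) (quot_sub G L N) = ext_ideal (ideal_colon \<bb> \<aa>)))
     \<and>
     (\<forall>\<cc>. is_ideal \<cc> \<and> quot_sub G L N = ann (quot_mod G L) (ext_ideal \<cc>) \<longrightarrow>
        N = ann G (ext_ideal (ideal_prod \<aa> \<cc>)) \<and>
        N = ann G (ext_ideal (\<aa> \<inter> \<cc>)) \<and>
        (grann G L = ext_ideal \<aa> \<and> grann (quot_mod G L) (quot_sub G L N) = ext_ideal \<cc> \<longrightarrow>
           grann G N = ext_ideal (\<aa> \<inter> \<cc>)))
     \<and>
     bij_betw (quot_sub G L) {S. special_ann_submodule G S \<and> L \<subseteq> S}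
        {T. special_ann_submodule (quot_mod G L) T}
     \<and>
     (\<forall>S1 S2. special_ann_submodule G S1 \<and> L \<subseteq> S1 \<and>
              special_ann_submodule G S2 \<and> L \<subseteq> S2 \<and> S1 \<subseteq> S2 \<longrightarrow>
              quot_sub G L S1 \<subseteq> quot_sub G L S2)"
proof -
  have p2: "2 \<le> p" using assms(1) by (rule prime_ge_2_nat)
  interpret skL p G \<aa>
    by unfold_locales (use assms p2 in auto)
  have L_eq: "L = LL" unfolding L_def LL_def using ann_ext ideal_0[OF a_id] by blast
  have qs: "\<And>X. quot_sub G LL X = q.cs ` X" by (simp add: quot_sub_def)
  have Nsub: "N \<subseteq> carrier G" and Nadd: "\<And>g h. g \<in> N \<Longrightarrow> h \<in> N \<Longrightarrow> add G g h \<in> N"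
    using assms(8) unfolding r_submodule_def by auto
  have LN: "LL \<subseteq> N" using assms(9) L_eq by simp
  have LLa: "LL = annG (\<lambda>_. \<aa>)" by (rule LL_def)
  have P_grG: "\<And>i g. g \<in> X \<Longrightarrow> smult G 0 ((frob G ^^ i) g) = zero G" if "X \<subseteq> carrier G" for X
    using that sm_zl frp_cl by blast
  have P_grQ: "\<And>i g. g \<in> X \<Longrightarrow> smult G 0 ((frob G ^^ i) g) \<in> LL" if "X \<subseteq> carrier G" for X
    using that sm_zl frp_cl q.L_zero by (metis subsetD)

  have I: "quot_sub G LL N = ann (quot_mod G LL) (ext_ideal (ideal_colon \<bb> \<aa>)) \<and>
        (grann G N = ext_ideal \<bb> \<longrightarrow>
           grann (quot_mod G LL) (quot_sub G LL N) = ext_ideal (ideal_colon \<bb> \<aa>))"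
    if b: "is_ideal \<bb>" "\<bb> \<subseteq> \<aa>" "N = ann G (ext_ideal \<bb>)" for \<bb>
  proof -
    have N1: "N = q.PL (\<lambda>_. ideal_colon \<bb> \<aa>)"
      using b ann_ext[OF ideal_0[OF b(1)]] part1[OF b(1,2)] by simp
    have c0: "\<forall>n. 0 \<in> (\<lambda>_. ideal_colon \<bb> \<aa>) n" using colon_0[OF b(1)] by simp
    have 1: "quot_sub G LL N = ann (quot_mod G LL) (ext_ideal (ideal_colon \<bb> \<aa>))"
      unfolding qs ext_eq q.ann_Q[OF c0] N1 ..
    have 2: "grann (quot_mod G LL) (quot_sub G LL N) = ext_ideal (ideal_colon \<bb> \<aa>)"
      if gr: "grann G N = ext_ideal \<bb>"
    proof -
      have key: "(\<forall>g\<in>N. smult G r ((frob G ^^ i) g) \<in> LL) \<longleftrightarrow> r \<in> ideal_colon \<bb> \<aa>" for r i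
      proof
        assume h: "\<forall>g\<in>N. smult G r ((frob G ^^ i) g) \<in> LL"
        have "r * s \<in> \<bb>" if s: "s \<in> \<aa>" for s
        proof -
          have "\<forall>g\<in>N. smult G (s * r) ((frob G ^^ i) g) = zero G"
          proof
            fix g assume g: "g \<in> N"
            have gc: "g \<in> carrier G" using g Nsub by blast
            have "smult G r ((frob G ^^ i) g) \<in> annG (\<lambda>_. \<aa>)" using h g LLa by blast
            then have "smult G s ((frob G ^^ 0) (smult G r ((frob G ^^ i) g))) = zero G"
              using s unfolding annG_def by blast
            then show "smult G (s * r) ((frob G ^^ i) g) = zero G"
              using gc by (simp add: sm_assoc frp_cl)
          qed
          then have "monom (s * r) i \<in> grann G N"
            unfolding grann_eq[OF Nsub] using mon_in[where P="\<lambda>c i g. smult G c ((frob G ^^ i) g) = zero G" and r="s * r" and i=i, OF P_grG[OF Nsub]] by simp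
          then have "coeff (monom (s * r) i) i \<in> \<bb>" using gr unfolding ext_ideal_def by blast
          then show ?thesis by (simp add: mult.commute)
        qed
        then show "r \<in> ideal_colon \<bb> \<aa>" unfolding ideal_colon_def by blast
      next
        assume "r \<in> ideal_colon \<bb> \<aa>"
        then show "\<forall>g\<in>N. smult G r ((frob G ^^ i) g) \<in> LL"
          using N1 unfolding q.PL_def by blast
      qed
      show ?thesis unfolding qs q.grann_Q[OF Nsub] ext_ideal_def using key by blast
    qed
    show ?thesis using 1 2 by blast
  qed

  have II: "N = ann G (ext_ideal (ideal_prod \<aa> \<cc>)) \<and>
        N = ann G (ext_ideal (\<aa> \<inter> \<cc>)) \<and>
        (grann G LL = ext_ideal \<aa> \<and> grann (quot_mod G LL) (quot_sub G LL N) = ext_ideal \<cc> \<longrightarrow>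
           grann G N = ext_ideal (\<aa> \<inter> \<cc>))"
    if c: "is_ideal \<cc>" "quot_sub G LL N = ann (quot_mod G LL) (ext_ideal \<cc>)" for \<cc>
  proof -
    have c0: "\<forall>n. 0 \<in> (\<lambda>_. \<cc>) n" using ideal_0[OF c(1)] by simp
    have eqc: "q.cs ` N = q.cs ` q.PL (\<lambda>_. \<cc>)"
      using c(2) unfolding qs ext_eq q.ann_Q[OF c0] .
    have Padd: "\<And>g h. g \<in> q.PL (\<lambda>_. \<cc>) \<Longrightarrow> h \<in> q.PL (\<lambda>_. \<cc>) \<Longrightarrow> add G g h \<in> q.PL (\<lambda>_. \<cc>)"
      by (rule q.PL_add)
    note ii = q.img_inj[of N "q.PL (\<lambda>_. \<cc>)"]
    from ii[OF Nsub LN Nadd q.PL_sub q.L_PL Padd eqc] have N1: "N = q.PL (\<lambda>_. \<cc>)" .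
    have N2: "N = annG (\<lambda>_. \<aa> \<inter> \<cc>)" using N1 part2(1)[OF c(1)] by simp
    have A1: "N = ann G (ext_ideal (ideal_prod \<aa> \<cc>))"
      using N2 part2(2)[OF c(1)] ann_ext[OF prod_0] by metis
    have A2: "N = ann G (ext_ideal (\<aa> \<inter> \<cc>))"
    proof -
      have "0 \<in> \<aa> \<inter> \<cc>" using ideal_0[OF a_id] ideal_0[OF c(1)] by blast
      then show ?thesis using N2 ann_ext by metis
    qed
    have A3: "grann G N = ext_ideal (\<aa> \<inter> \<cc>)"
      if gr: "grann G LL = ext_ideal \<aa>" "grann (quot_mod G LL) (quot_sub G LL N) = ext_ideal \<cc>"
    proof -
      have key: "(\<forall>g\<in>N. smult G r ((frob G ^^ i) g) = zero G) \<longleftrightarrow> r \<in> \<aa> \<inter> \<cc>" for r i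
      proof
        assume h: "\<forall>g\<in>N. smult G r ((frob G ^^ i) g) = zero G"
        have "monom r i \<in> grann G LL"
          unfolding grann_eq[OF q.L_sub] using mon_in[where P="\<lambda>c i g. smult G c ((frob G ^^ i) g) = zero G" and r=r and i=i, OF P_grG[OF q.L_sub]] h LN by auto
        then have "coeff (monom r i) i \<in> \<aa>" using gr(1) unfolding ext_ideal_def by blast
        then have ra: "r \<in> \<aa>" by simp
        have "monom r i \<in> grann (quot_mod G LL) (quot_sub G LL N)"
          unfolding qs q.grann_Q[OF Nsub] using mon_in[where P="\<lambda>c i g. smult G c ((frob G ^^ i) g) \<in> LL" and r=r and i=i, OF P_grQ[OF Nsub]] h q.L_zero by auto
        then have "coeff (monom r i) i \<in> \<cc>" using gr(2) unfolding ext_ideal_def by blast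
        then have rc: "r \<in> \<cc>" by simp
        show "r \<in> \<aa> \<inter> \<cc>" using ra rc by blast
      next
        assume "r \<in> \<aa> \<inter> \<cc>"
        then show "\<forall>g\<in>N. smult G r ((frob G ^^ i) g) = zero G"
          using N2 unfolding annG_def by blast
      qed
      show ?thesis unfolding grann_eq[OF Nsub] ext_ideal_def using key by blast
    qed
    show ?thesis using A1 A2 A3 by blast
  qed

  let ?A = "{S. special_ann_submodule G S \<and> LL \<subseteq> S}"
  let ?B = "{T. special_ann_submodule (quot_mod G LL) T}"
  have inj: "inj_on (quot_sub G LL) ?A"
  proof (rule inj_onI)
    fix S1 S2 assume S1: "S1 \<in> ?A" and S2: "S2 \<in> ?A" and eq: "quot_sub G LL S1 = quot_sub G LL S2"
    have "special_ann_submodule G S1" using S1 by simp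
    then obtain d1 where d1: "S1 = annG d1" unfolding special_G by blast
    have "special_ann_submodule G S2" using S2 by simp
    then obtain d2 where d2: "S2 = annG d2" unfolding special_G by blast
    have l1: "LL \<subseteq> annG d1" using S1 d1 by simp
    have l2: "LL \<subseteq> annG d2" using S2 d2 by simp
    have e: "q.cs ` annG d1 = q.cs ` annG d2" using eq unfolding qs d1 d2 .
    have a1: "\<And>g h. g \<in> annG d1 \<Longrightarrow> h \<in> annG d1 \<Longrightarrow> add G g h \<in> annG d1" by (rule annG_add)
    have a2: "\<And>g h. g \<in> annG d2 \<Longrightarrow> h \<in> annG d2 \<Longrightarrow> add G g h \<in> annG d2" by (rule annG_add)
    have "annG d1 = annG d2" by (rule q.img_inj[OF annG_sub l1 a1 annG_sub l2 a2 e])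
    then show "S1 = S2" using d1 d2 by simp
  qed
  have img1: "quot_sub G LL ` ?A \<subseteq> ?B"
  proof
    fix T assume "T \<in> quot_sub G LL ` ?A"
    then obtain S where S: "S \<in> ?A" "T = quot_sub G LL S" by blast
    have "special_ann_submodule G S" using S(1) by simp
    then obtain d where d: "\<forall>n. is_ideal (d n)" "\<forall>n. d n \<subseteq> d (Suc n)" "S = annG d"
      unfolding special_G by blast
    have LS: "LL \<subseteq> annG d" using S(1) d(3) by simp
    have "annG d = q.PL (\<lambda>n. ideal_colon (d n) \<aa>)"
      by (rule part3a) (use d LS in auto)
    then have T: "T = q.cs ` q.PL (\<lambda>n. ideal_colon (d n) \<aa>)" using S(2) d(3) qs by simp
    have i1: "\<forall>n. is_ideal (ideal_colon (d n) \<aa>)" using d(1) colon_ideal by blast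
    have i2: "\<forall>n. ideal_colon (d n) \<aa> \<subseteq> ideal_colon (d (Suc n)) \<aa>" using d(2) colon_mono by blast
    have "special_ann_submodule q.Q T" unfolding special_Q
      by (rule exI[of _ "\<lambda>n. ideal_colon (d n) \<aa>"]) (use i1 i2 T in blast)
    then show "T \<in> ?B" by simp
  qed
  have img2: "?B \<subseteq> quot_sub G LL ` ?A"
  proof
    fix T assume "T \<in> ?B"
    then have "special_ann_submodule q.Q T" by simp
    then obtain d where d: "\<forall>n. is_ideal (d n)" "\<forall>n. d n \<subseteq> d (Suc n)" "T = q.cs ` q.PL d"
      unfolding special_Q by blast
    let ?S = "annG (\<lambda>n. \<aa> \<inter> d n)"
    have "?S = q.PL d" by (rule part3b) (use d in auto)
    then have T: "T = quot_sub G LL ?S" using d(3) qs by simp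
    have i1: "\<forall>n. is_ideal (\<aa> \<inter> d n)" using d(1) ideal_int a_id by blast
    have i2: "\<forall>n. \<aa> \<inter> d n \<subseteq> \<aa> \<inter> d (Suc n)" using d(2) by blast
    have "special_ann_submodule G ?S" unfolding special_G
      by (rule exI[of _ "\<lambda>n. \<aa> \<inter> d n"]) (use i1 i2 in blast)
    moreover have "LL \<subseteq> ?S" unfolding LLa by (rule annG_anti) blast
    ultimately have "?S \<in> ?A" by simp
    then show "T \<in> quot_sub G LL ` ?A" using T by blast
  qed
  have bij: "bij_betw (quot_sub G LL) ?A ?B"
    unfolding bij_betw_def using inj img1 img2 by blast
  have mono: "\<forall>S1 S2. special_ann_submodule G S1 \<and> LL \<subseteq> S1 \<and>
              special_ann_submodule G S2 \<and> LL \<subseteq> S2 \<and> S1 \<subseteq> S2 \<longrightarrow>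
              quot_sub G LL S1 \<subseteq> quot_sub G LL S2"
    unfolding qs by blast
  show ?thesis unfolding L_eq
  proof (intro conjI)
    show "\<forall>\<bb>. is_ideal \<bb> \<and> \<bb> \<subseteq> \<aa> \<and> N = ann G (ext_ideal \<bb>) \<longrightarrow>
        quot_sub G LL N = ann (quot_mod G LL) (ext_ideal (ideal_colon \<bb> \<aa>)) \<and>
        (grann G N = ext_ideal \<bb> \<longrightarrow>
           grann (quot_mod G LL) (quot_sub G LL N) = ext_ideal (ideal_colon \<bb> \<aa>))"
    proof (intro allI impI)
      fix \<bb> assume "is_ideal \<bb> \<and> \<bb> \<subseteq> \<aa> \<and> N = ann G (ext_ideal \<bb>)"
      then show "quot_sub G LL N = ann (quot_mod G LL) (ext_ideal (ideal_colon \<bb> \<aa>)) \<and>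
        (grann G N = ext_ideal \<bb> \<longrightarrow>
           grann (quot_mod G LL) (quot_sub G LL N) = ext_ideal (ideal_colon \<bb> \<aa>))"
        using I by (elim conjE)
    qed
    show "\<forall>\<cc>. is_ideal \<cc> \<and> quot_sub G LL N = ann (quot_mod G LL) (ext_ideal \<cc>) \<longrightarrow>
        N = ann G (ext_ideal (ideal_prod \<aa> \<cc>)) \<and>
        N = ann G (ext_ideal (\<aa> \<inter> \<cc>)) \<and>
        (grann G LL = ext_ideal \<aa> \<and> grann (quot_mod G LL) (quot_sub G LL N) = ext_ideal \<cc> \<longrightarrow>
           grann G N = ext_ideal (\<aa> \<inter> \<cc>))"
    proof (intro allI impI)
      fix \<cc> assume "is_ideal \<cc> \<and> quot_sub G LL N = ann (quot_mod G LL) (ext_ideal \<cc>)"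
      then show "N = ann G (ext_ideal (ideal_prod \<aa> \<cc>)) \<and>
        N = ann G (ext_ideal (\<aa> \<inter> \<cc>)) \<and>
        (grann G LL = ext_ideal \<aa> \<and> grann (quot_mod G LL) (quot_sub G LL N) = ext_ideal \<cc> \<longrightarrow>
           grann G N = ext_ideal (\<aa> \<inter> \<cc>))"
        using II by (elim conjE)
    qed
    show "bij_betw (quot_sub G LL) ?A ?B" by (rule bij)
  qed (rule mono)
qed


end
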